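(* Let $\mathbf{H}$ be a real symmetric $d\times d$ matrix and let $\mathbf{H}(\omega)$ be random symmetric matrices with $\mathbb{E}\,\mathbf{H}(\omega)=\mathbf{H}$, $\mathbb{E}\|\mathbf{H}(\omega)\|_2^2\le\sigma^2$ and $\|\mathbf{H}(\omega)\|_2\le G_1$. Let $\alpha(n)>0$ with $\sum_n\alpha(n)=\infty$, $\sum_n\alpha(n)^2<\infty$. Starting from a unit vector $\mathbf{v}(0)$, define $$\hat{\mathbf{v}}(n+1)=\mathbf{v}(n)-\alpha(n)(I-\mathbf{v}(n)\mathbf{v}(n)^\top)\mathbf{H}(\omega(n))\mathbf{v}(n),\qquad \mathbf{v}(n+1)=\hat{\mathbf{v}}(n+1)/\|\hat{\mathbf{v}}(n+1)\|_2,$$ with $\omega(n)$ independent fresh samples. Then, almost surely, the limit points of $(\mathbf{v}(n))$ lie in the eigenspaces of $\mathbf{H}$, i.e. they are eigenvectors of $\mathbf{H}$. *)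

theory Defs
  imports "HOL-Analysis.Analysis" "HOL-Probability.Probability"
begin

definition opnorm2 :: "real^'n^'m \<Rightarrow> real" where
  "opnorm2 A = onorm (\<lambda>x. A *v x)"

definition outer :: "real^'n \<Rightarrow> real^'m \<Rightarrow> real^'m^'n" where
  "outer u v = (\<chi> i j. u $ i * v $ j)"

fun oja_iter :: "(nat \<Rightarrow> real) \<Rightarrow> (nat \<Rightarrow> real^'d^'d) \<Rightarrow> real^'d \<Rightarrow> nat \<Rightarrow> real^'d" where
  "oja_iter a Hs v0 0 = v0"
| "oja_iter a Hs v0 (Suc n) =
     (let v = oja_iter a Hs v0 n;
          w = v - a n *s ((mat 1 - outer v v) *v (Hs n *v v))
      in (1 / norm w) *s w)"

end

theory Submission
  imports Defs
begin


lemma sq_le: "\<bar>a\<bar> \<le> b \<Longrightarrow> a\<^sup>2 \<le> (b::real)\<^sup>2"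
  by (metis abs_ge_zero power2_abs power_mono)

locale mgsetup = prob_space M for M :: "'a measure" +
  fixes P :: "'w measure" and W :: "nat \<Rightarrow> 'a \<Rightarrow> 'w" and e :: "'w \<Rightarrow> real" and B :: real
  assumes PP: "prob_space P" and Wm: "\<And>n. W n \<in> measurable M P"
    and ind: "indep_vars (\<lambda>_. P) W UNIV" and distrW: "\<And>n. distr M P (W n) = P"
    and em: "e \<in> borel_measurable P" and eB: "\<And>w. w \<in> space P \<Longrightarrow> \<bar>e w\<bar> \<le> B"
    and e0: "integral\<^sup>L P e = 0"
begin

definition predf :: "nat \<Rightarrow> ('a \<Rightarrow> real) \<Rightarrow> bool" where
  "predf n Y \<longleftrightarrow> (\<exists>F \<in> borel_measurable (PiM {..<n} (\<lambda>_. P)). \<forall>x\<in>space M. Y x = F (\<lambda>i\<in>{..<n}. W i x))"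

lemma restrW_meas: "(\<lambda>x. \<lambda>i\<in>I. W i x) \<in> measurable M (PiM I (\<lambda>_. P))"
  by (rule measurable_restrict) (use Wm in auto)

lemma predf_meas: assumes "predf n Y" shows "Y \<in> borel_measurable M"
proof -
  obtain F where F: "F \<in> borel_measurable (PiM {..<n} (\<lambda>_. P))" "\<forall>x\<in>space M. Y x = F (\<lambda>i\<in>{..<n}. W i x)"
    using assms unfolding predf_def by blast
  have "(\<lambda>x. F (\<lambda>i\<in>{..<n}. W i x)) \<in> borel_measurable M"
    by (rule measurable_compose[OF restrW_meas F(1)])
  then show ?thesis using F(2) by (subst measurable_cong) auto
qed

lemma predf_mono: assumes "predf m Y" "m \<le> n" shows "predf n Y"
proof -
  obtain F where F: "F \<in> borel_measurable (PiM {..<m} (\<lambda>_. P))" "\<forall>x\<in>space M. Y x = F (\<lambda>i\<in>{..<m}. W i x)"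
    using assms unfolding predf_def by blast
  have "(\<lambda>f. F (restrict f {..<m})) \<in> borel_measurable (PiM {..<n} (\<lambda>_. P))"
    by (rule measurable_compose[OF measurable_restrict_subset F(1)]) (use assms in auto)
  moreover have "\<forall>x\<in>space M. Y x = F (restrict (\<lambda>i\<in>{..<n}. W i x) {..<m})"
    using F(2) assms(2) by (auto simp: restrict_def fun_eq_iff intro!: arg_cong[where f=F])
  ultimately show ?thesis unfolding predf_def by (intro bexI[of _ "\<lambda>f. F (restrict f {..<m})"]) auto
qed

lemma predf_comp: assumes "predf n Y" "\<phi> \<in> borel_measurable borel" shows "predf n (\<lambda>x. \<phi> (Y x))"
proof -
  obtain F where F: "F \<in> borel_measurable (PiM {..<n} (\<lambda>_. P))" "\<forall>x\<in>space M. Y x = F (\<lambda>i\<in>{..<n}. W i x)"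
    using assms unfolding predf_def by blast
  show ?thesis unfolding predf_def
    by (rule bexI[of _ "\<lambda>f. \<phi> (F f)"]) (use F assms(2) in auto)
qed

lemma predf_const: "predf n (\<lambda>_. c)"
  unfolding predf_def by (rule bexI[of _ "\<lambda>_. c"]) auto

lemma predf_bin: assumes "predf n Y" "predf n Z" "\<phi> \<in> borel_measurable (borel \<Otimes>\<^sub>M borel)"
  shows "predf n (\<lambda>x. \<phi> (Y x, Z x))"
proof -
  obtain F where F: "F \<in> borel_measurable (PiM {..<n} (\<lambda>_. P))" "\<forall>x\<in>space M. Y x = F (\<lambda>i\<in>{..<n}. W i x)"
    using assms unfolding predf_def by blast
  obtain G where G: "G \<in> borel_measurable (PiM {..<n} (\<lambda>_. P))" "\<forall>x\<in>space M. Z x = G (\<lambda>i\<in>{..<n}. W i x)"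
    using assms unfolding predf_def by blast
  have "(\<lambda>f. \<phi> (F f, G f)) \<in> borel_measurable (PiM {..<n} (\<lambda>_. P))"
    by (rule measurable_compose[OF measurable_Pair[OF F(1) G(1)] assms(3)])
  then show ?thesis unfolding predf_def using F G by auto
qed

lemma predf_mult: "predf n Y \<Longrightarrow> predf n Z \<Longrightarrow> predf n (\<lambda>x. Y x * Z x)"
  using predf_bin[of n Y Z "\<lambda>p. fst p * snd p"]
  by (simp add: borel_prod borel_measurable_continuous_onI continuous_intros)

lemma predf_add: "predf n Y \<Longrightarrow> predf n Z \<Longrightarrow> predf n (\<lambda>x. Y x + Z x)"
  using predf_bin[of n Y Z "\<lambda>p. fst p + snd p"]
  by (simp add: borel_prod borel_measurable_continuous_onI continuous_intros)

lemma predf_diff: "predf n Y \<Longrightarrow> predf n Z \<Longrightarrow> predf n (\<lambda>x. Y x - Z x)"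
  using predf_bin[of n Y Z "\<lambda>p. fst p - snd p"]
  by (simp add: borel_prod borel_measurable_continuous_onI continuous_intros)

lemma predf_sum: "finite S \<Longrightarrow> (\<And>k. k \<in> S \<Longrightarrow> predf n (Y k)) \<Longrightarrow> predf n (\<lambda>x. \<Sum>k\<in>S. Y k x)"
  by (induction S rule: finite_induct) (auto intro: predf_const predf_add)

lemma predf_prod: "finite S \<Longrightarrow> (\<And>k. k \<in> S \<Longrightarrow> predf n (Y k)) \<Longrightarrow> predf n (\<lambda>x. \<Prod>k\<in>S. Y k x)"
  by (induction S rule: finite_induct) (auto intro: predf_const predf_mult)

lemma predf_W: assumes "k < n" "g \<in> borel_measurable P" shows "predf n (\<lambda>x. g (W k x))"
  unfolding predf_def
proof (rule bexI[of _ "\<lambda>f. g (f k)"])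
  show "(\<lambda>f. g (f k)) \<in> borel_measurable (PiM {..<n} (\<lambda>_. P))"
    by (rule measurable_compose[OF measurable_component_singleton[of k "{..<n}" "\<lambda>_. P"] assms(2)]) (use assms in auto)
qed (use assms in auto)

lemma eWm: "(\<lambda>x. e (W n x)) \<in> borel_measurable M"
  by (rule measurable_compose[OF Wm em])

lemma eWB: "x \<in> space M \<Longrightarrow> \<bar>e (W n x)\<bar> \<le> B"
  using eB measurable_space[OF Wm] by blast

lemma B_nonneg: "0 \<le> B"
proof -
  obtain x where "x \<in> space M" using not_empty by blast
  then show ?thesis using eWB[of x 0] by linarith
qed

lemma int_eW: "integral\<^sup>L M (\<lambda>x. e (W n x)) = 0"
  using integral_distr[OF Wm em, of n] distrW[of n] e0 by simp

lemma bounded_integrable: fixes K :: real assumes "f \<in> borel_measurable M" "\<And>x. x \<in> space M \<Longrightarrow> \<bar>f x\<bar> \<le> K"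
  shows "integrable M f"
  by (rule finite_measure.integrable_const_bound[where B=K]) (use assms in \<open>auto intro: finite_measure_axioms\<close>)

lemma predf_orth: fixes K :: real assumes "predf n Y" "\<And>x. x \<in> space M \<Longrightarrow> \<bar>Y x\<bar> \<le> K"
  shows "integral\<^sup>L M (\<lambda>x. Y x * e (W n x)) = 0"
proof -
  obtain F where F: "F \<in> borel_measurable (PiM {..<n} (\<lambda>_. P))" "\<forall>x\<in>space M. Y x = F (\<lambda>i\<in>{..<n}. W i x)"
    using assms unfolding predf_def by blast
  have iv: "indep_var (PiM {..<n} (\<lambda>_. P)) (\<lambda>x. \<lambda>i\<in>{..<n}. W i x) (PiM {n} (\<lambda>_. P)) (\<lambda>x. \<lambda>i\<in>{n}. W i x)"
    by (rule indep_var_restrict[OF ind]) auto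
  have em': "(\<lambda>f. e (f n)) \<in> borel_measurable (PiM {n} (\<lambda>_. P))"
    by (rule measurable_compose[OF measurable_component_singleton[of n "{n}" "\<lambda>_. P"] em]) auto
  have iv2: "indep_var borel (F \<circ> (\<lambda>x. \<lambda>i\<in>{..<n}. W i x)) borel ((\<lambda>f. e (f n)) \<circ> (\<lambda>x. \<lambda>i\<in>{n}. W i x))"
    by (rule indep_var_compose[OF iv F(1) em'])
  have c1: "(F \<circ> (\<lambda>x. \<lambda>i\<in>{..<n}. W i x)) = (\<lambda>x. F (\<lambda>i\<in>{..<n}. W i x))" by (simp add: comp_def)
  have c2: "((\<lambda>f. e (f n)) \<circ> (\<lambda>x. \<lambda>i\<in>{n}. W i x)) = (\<lambda>x. e (W n x))" by (simp add: comp_def)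
  have m1: "(\<lambda>x. F (\<lambda>i\<in>{..<n}. W i x)) \<in> borel_measurable M"
    by (rule measurable_compose[OF restrW_meas F(1)])
  have i1: "integrable M (\<lambda>x. F (\<lambda>i\<in>{..<n}. W i x))"
    by (rule bounded_integrable[OF m1, of K]) (use F(2) assms(2) in auto)
  have i2: "integrable M (\<lambda>x. e (W n x))"
    by (rule bounded_integrable[OF eWm, where K=B]) (use eWB in auto)
  have "integral\<^sup>L M (\<lambda>x. F (\<lambda>i\<in>{..<n}. W i x) * e (W n x)) = 
        integral\<^sup>L M (\<lambda>x. F (\<lambda>i\<in>{..<n}. W i x)) * integral\<^sup>L M (\<lambda>x. e (W n x))"
    using indep_var_lebesgue_integral[OF iv2[unfolded c1 c2] i1 i2] .
  also have "\<dots> = 0" using int_eW by simp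
  finally have "integral\<^sup>L M (\<lambda>x. F (\<lambda>i\<in>{..<n}. W i x) * e (W n x)) = 0" .
  moreover have "integral\<^sup>L M (\<lambda>x. Y x * e (W n x)) = integral\<^sup>L M (\<lambda>x. F (\<lambda>i\<in>{..<n}. W i x) * e (W n x))"
    using F(2) by (intro Bochner_Integration.integral_cong) auto
  ultimately show ?thesis by simp
qed


definition ssum :: "(nat \<Rightarrow> 'a \<Rightarrow> real) \<Rightarrow> nat \<Rightarrow> 'a \<Rightarrow> real" where
  "ssum d N x = (\<Sum>k<N. d k x * e (W k x))"

lemma ssum_Suc: "ssum d (Suc N) x = ssum d N x + d N x * e (W N x)"
  unfolding ssum_def by simp

lemma ssum_predf: assumes "\<And>k. predf k (d k)" shows "predf N (ssum d N)"
  unfolding ssum_def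
proof (rule predf_sum)
  fix k assume "k \<in> {..<N}"
  then show "predf N (\<lambda>x. d k x * e (W k x))"
    by (intro predf_mult predf_mono[OF assms, of k] predf_W em) auto
qed simp

lemma ssum_bound: assumes "\<And>k x. x \<in> space M \<Longrightarrow> \<bar>d k x\<bar> \<le> D k" "x \<in> space M"
  shows "\<bar>ssum d N x\<bar> \<le> (\<Sum>k<N. D k * B)"
  unfolding ssum_def
proof -
  have "\<bar>\<Sum>k<N. d k x * e (W k x)\<bar> \<le> (\<Sum>k<N. \<bar>d k x * e (W k x)\<bar>)" by (rule sum_abs)
  also have "\<dots> \<le> (\<Sum>k<N. D k * B)"
  proof (rule sum_mono)
    fix k
    have "\<bar>d k x\<bar> * \<bar>e (W k x)\<bar> \<le> D k * B"
      using assms eWB[of x k] by (intro mult_mono) (auto intro: order_trans[OF abs_ge_zero])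
    then show "\<bar>d k x * e (W k x)\<bar> \<le> D k * B" by (simp add: abs_mult)
  qed
  finally show "\<bar>\<Sum>k<N. d k x * e (W k x)\<bar> \<le> (\<Sum>k<N. D k * B)" .
qed

lemma ssum_L2: assumes pd: "\<And>k. predf k (d k)" and bd: "\<And>k x. x \<in> space M \<Longrightarrow> \<bar>d k x\<bar> \<le> D k"
  shows "integral\<^sup>L M (\<lambda>x. (ssum d N x)\<^sup>2) \<le> B\<^sup>2 * (\<Sum>k<N. (D k)\<^sup>2)"
proof (induction N)
  case 0
  then show ?case by (simp add: ssum_def)
next
  case (Suc N)
  have mS: "ssum d N \<in> borel_measurable M" by (rule predf_meas[OF ssum_predf[OF pd]])
  have md: "d N \<in> borel_measurable M" by (rule predf_meas[OF pd])
  have iS: "integrable M (\<lambda>x. (ssum d N x)\<^sup>2)"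
    by (rule bounded_integrable[where K="(\<Sum>k<N. D k * B)\<^sup>2"])
       (use mS in measurable, use ssum_bound[of d D, OF bd] in \<open>auto intro!: sq_le\<close>)
  have bX: "\<bar>ssum d N x * d N x\<bar> \<le> (\<Sum>k<N. D k * B) * D N" if "x \<in> space M" for x
    using ssum_bound[of d D, OF bd that, where N=N] bd[OF that, of N] by (simp add: abs_mult mult_mono)
  have iX: "integrable M (\<lambda>x. ssum d N x * d N x * e (W N x))"
  proof (rule bounded_integrable[where K="(\<Sum>k<N. D k * B) * D N * B"])
    show "(\<lambda>x. ssum d N x * d N x * e (W N x)) \<in> borel_measurable M" using mS md eWm by measurable
    fix x assume x: "x \<in> space M"
    have "\<bar>ssum d N x * d N x\<bar> * \<bar>e (W N x)\<bar> \<le> ((\<Sum>k<N. D k * B) * D N) * B"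
      by (rule mult_mono) (use bX[OF x] eWB[OF x] in auto)
    then show "\<bar>ssum d N x * d N x * e (W N x)\<bar> \<le> (\<Sum>k<N. D k * B) * D N * B" by (simp add: abs_mult)
  qed
  have bY: "(d N x * e (W N x))\<^sup>2 \<le> (D N)\<^sup>2 * B\<^sup>2" if "x \<in> space M" for x
  proof -
    have "\<bar>d N x * e (W N x)\<bar> \<le> D N * B"
      using bd[OF that, of N] eWB[OF that, of N] by (simp add: abs_mult mult_mono)
    then have "(d N x * e (W N x))\<^sup>2 \<le> (D N * B)\<^sup>2" by (rule sq_le)
    then show ?thesis by (simp add: power_mult_distrib)
  qed
  have iY: "integrable M (\<lambda>x. (d N x * e (W N x))\<^sup>2)"
    by (rule bounded_integrable[where K="(D N)\<^sup>2 * B\<^sup>2"]) (use md eWm in measurable, use bY in auto)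
  have orth: "integral\<^sup>L M (\<lambda>x. ssum d N x * d N x * e (W N x)) = 0"
    by (rule predf_orth[OF predf_mult[OF ssum_predf[OF pd] pd] bX])
  have eq: "(\<lambda>x. (ssum d (Suc N) x)\<^sup>2) = (\<lambda>x. (ssum d N x)\<^sup>2 + 2 * (ssum d N x * d N x * e (W N x)) + (d N x * e (W N x))\<^sup>2)"
    by (auto simp: ssum_Suc power2_eq_square algebra_simps)
  have "integral\<^sup>L M (\<lambda>x. (ssum d (Suc N) x)\<^sup>2) = integral\<^sup>L M (\<lambda>x. (ssum d N x)\<^sup>2) + 2 * integral\<^sup>L M (\<lambda>x. ssum d N x * d N x * e (W N x)) + integral\<^sup>L M (\<lambda>x. (d N x * e (W N x))\<^sup>2)"
    unfolding eq using iS iX iY by (simp add: integral_add integral_mult_right)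
  also have "\<dots> \<le> B\<^sup>2 * (\<Sum>k<N. (D k)\<^sup>2) + 0 + (D N)\<^sup>2 * B\<^sup>2"
  proof -
    have "integral\<^sup>L M (\<lambda>x. (d N x * e (W N x))\<^sup>2) \<le> integral\<^sup>L M (\<lambda>x. (D N)\<^sup>2 * B\<^sup>2)"
      by (rule integral_mono[OF iY]) (use bY in auto)
    then show ?thesis using Suc.IH orth by (simp add: prob_space)
  qed
  also have "\<dots> = B\<^sup>2 * (\<Sum>k<Suc N. (D k)\<^sup>2)" by (simp add: algebra_simps)
  finally show ?case .
qed


lemma ssum_diff: assumes "m \<le> k" shows "ssum d k x - ssum d m x = (\<Sum>j\<in>{m..<k}. d j x * e (W j x))"
proof -
  have "ssum d k x = (\<Sum>j\<in>{0..<m}. d j x * e (W j x)) + (\<Sum>j\<in>{m..<k}. d j x * e (W j x))"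
    unfolding ssum_def atLeast0LessThan[symmetric] using assms by (subst sum.atLeastLessThan_concat) auto
  then show ?thesis unfolding ssum_def atLeast0LessThan[symmetric] by simp
qed

lemma ssum_max: assumes pd: "\<And>k. predf k (d k)" and bd: "\<And>k x. x \<in> space M \<Longrightarrow> \<bar>d k x\<bar> \<le> D k"
  and mN: "m \<le> N" and lam: "0 < lm"
  shows "prob {x\<in>space M. \<exists>k\<in>{m..N}. lm \<le> \<bar>ssum d k x - ssum d m x\<bar>} \<le> B\<^sup>2 * (\<Sum>k\<in>{m..<N}. (D k)\<^sup>2) / lm\<^sup>2"
proof -
  define ind where "ind k x = (\<Prod>j\<in>{m..k}. if \<bar>ssum d j x - ssum d m x\<bar> < lm then 1 else (0::real))" for k x
  define d' where "d' k x = (if m \<le> k then ind k x * d k x else 0)" for k x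
  define D' where "D' k = (if m \<le> k then D k else 0)" for k
  have phim: "(\<lambda>t::real. if \<bar>t\<bar> < lm then 1 else (0::real)) \<in> borel_measurable borel" by measurable
  have pind: "predf k (ind k)" if "m \<le> k" for k
    unfolding ind_def
  proof (rule predf_prod)
    fix j assume j: "j \<in> {m..k}"
    have "predf j (\<lambda>x. ssum d j x - ssum d m x)"
      by (rule predf_diff[OF ssum_predf[OF pd] predf_mono[OF ssum_predf[OF pd]]]) (use j in auto)
    then have "predf j (\<lambda>x. if \<bar>ssum d j x - ssum d m x\<bar> < lm then 1 else (0::real))"
      using predf_comp[OF _ phim] by blast
    then show "predf k (\<lambda>x. if \<bar>ssum d j x - ssum d m x\<bar> < lm then 1 else (0::real))"
      by (rule predf_mono) (use j in auto)
  qed simp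
  have pd': "predf k (d' k)" for k
  proof (cases "m \<le> k")
    case True
    then have "d' k = (\<lambda>x. ind k x * d k x)" unfolding d'_def by auto
    then show ?thesis using predf_mult[OF pind[OF True] pd] by simp
  next
    case False
    then have "d' k = (\<lambda>x. 0)" unfolding d'_def by auto
    then show ?thesis using predf_const by simp
  qed
  have ind01: "0 \<le> ind k x \<and> ind k x \<le> 1" for k x
    unfolding ind_def by (auto intro!: prod_nonneg prod_le_1)
  have bd': "\<bar>d' k x\<bar> \<le> D' k" if "x \<in> space M" for k x
  proof (cases "m \<le> k")
    case True
    have "\<bar>ind k x\<bar> * \<bar>d k x\<bar> \<le> 1 * D k"
      by (rule mult_mono) (use ind01[of k x] bd[OF that, of k] in auto)
    then show ?thesis using True unfolding d'_def D'_def by (simp add: abs_mult)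
  next
    case False
    then show ?thesis unfolding d'_def D'_def by simp
  qed
  have key: "lm\<^sup>2 \<le> (ssum d' N x)\<^sup>2" if x: "\<exists>k\<in>{m..N}. lm \<le> \<bar>ssum d k x - ssum d m x\<bar>" for x
  proof -
    define Q where "Q k \<longleftrightarrow> m \<le> k \<and> k \<le> N \<and> lm \<le> \<bar>ssum d k x - ssum d m x\<bar>" for k
    define k0 where "k0 = (LEAST k. Q k)"
    have "\<exists>k. Q k" using x unfolding Q_def by auto
    then have Qk0: "Q k0" unfolding k0_def by (metis LeastI)
    have lt: "\<bar>ssum d j x - ssum d m x\<bar> < lm" if "m \<le> j" "j < k0" for j
    proof -
      have "\<not> Q j" using not_less_Least[OF that(2)[unfolded k0_def]] .
      then show ?thesis using that Qk0 unfolding Q_def by auto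
    qed
    have dk: "d' k x = (if k \<in> {m..<k0} then d k x else 0)" for k
    proof (cases "m \<le> k")
      case True
      show ?thesis
      proof (cases "k < k0")
        case True2: True
        have "ind k x = (\<Prod>j\<in>{m..k}. 1)" unfolding ind_def
          by (rule prod.cong) (use lt True2 in auto)
        then show ?thesis using True True2 unfolding d'_def by simp
      next
        case False
        have "k0 \<in> {m..k}" using Qk0 False unfolding Q_def by auto
        moreover have "\<not> \<bar>ssum d k0 x - ssum d m x\<bar> < lm" using Qk0 unfolding Q_def by auto
        ultimately have "ind k x = 0" unfolding ind_def by (subst prod_zero_iff) auto
        then show ?thesis using False unfolding d'_def by simp
      qed
    next
      case False
      then show ?thesis unfolding d'_def by simp
    qed
    have "ssum d' N x = (\<Sum>k<N. (if k \<in> {m..<k0} then d k x * e (W k x) else 0))"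
      unfolding ssum_def dk by (rule sum.cong) auto
    also have "\<dots> = (\<Sum>k\<in>{..<N} \<inter> {m..<k0}. d k x * e (W k x))"
      by (rule sum.inter_restrict[symmetric]) simp
    also have "{..<N} \<inter> {m..<k0} = {m..<k0}" using Qk0 unfolding Q_def by auto
    also have "(\<Sum>k\<in>{m..<k0}. d k x * e (W k x)) = ssum d k0 x - ssum d m x"
      using ssum_diff[of m k0 d x] Qk0 unfolding Q_def by simp
    finally have "ssum d' N x = ssum d k0 x - ssum d m x" .
    moreover have "lm \<le> \<bar>ssum d k0 x - ssum d m x\<bar>" using Qk0 unfolding Q_def by auto
    ultimately show ?thesis using sq_le[of lm "\<bar>ssum d k0 x - ssum d m x\<bar>"] lam by simp
  qed
  have mS': "ssum d' N \<in> borel_measurable M" by (rule predf_meas[OF ssum_predf[OF pd']])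
  have "prob {x\<in>space M. \<exists>k\<in>{m..N}. lm \<le> \<bar>ssum d k x - ssum d m x\<bar>} \<le> prob {x\<in>space M. lm\<^sup>2 \<le> (ssum d' N x)\<^sup>2}"
    by (rule finite_measure_mono) (use key mS' in auto)
  also have "\<dots> \<le> integral\<^sup>L M (\<lambda>x. (ssum d' N x)\<^sup>2) / lm\<^sup>2"
  proof (rule integral_Markov_inequality_measure[where A="space M"])
    show "integrable M (\<lambda>x. (ssum d' N x)\<^sup>2)"
      by (rule bounded_integrable[where K="(\<Sum>k<N. D' k * B)\<^sup>2"])
         (use mS' in measurable, use ssum_bound[of d' D', OF bd'] in \<open>auto intro!: sq_le\<close>)
  qed (use lam in auto)
  also have "\<dots> \<le> B\<^sup>2 * (\<Sum>k<N. (D' k)\<^sup>2) / lm\<^sup>2"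
    by (rule divide_right_mono[OF ssum_L2[OF pd' bd']]) simp_all
  also have "(\<Sum>k<N. (D' k)\<^sup>2) = (\<Sum>k\<in>{m..<N}. (D k)\<^sup>2)"
  proof -
    have "(\<Sum>k<N. (D' k)\<^sup>2) = (\<Sum>k<N. if m \<le> k then (D k)\<^sup>2 else 0)"
      unfolding D'_def by (rule sum.cong) auto
    also have "\<dots> = (\<Sum>k\<in>{k\<in>{..<N}. m \<le> k}. (D k)\<^sup>2)"
      by (rule sum.inter_filter[symmetric]) simp
    also have "{k\<in>{..<N}. m \<le> k} = {m..<N}" by auto
    finally show ?thesis .
  qed
  finally show ?thesis .
qed


lemma ssum_meas: "(\<And>k. predf k (d k)) \<Longrightarrow> ssum d N \<in> borel_measurable M"
  by (rule predf_meas[OF ssum_predf])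

lemma ssum_tail: assumes pd: "\<And>k. predf k (d k)" and bd: "\<And>k x. x \<in> space M \<Longrightarrow> \<bar>d k x\<bar> \<le> D k"
  and sD: "summable (\<lambda>k. (D k)\<^sup>2)" and lam: "0 < lm"
  shows "prob {x\<in>space M. \<exists>k\<ge>m. lm < \<bar>ssum d k x - ssum d m x\<bar>} \<le> B\<^sup>2 * (\<Sum>i. (D (i + m))\<^sup>2) / lm\<^sup>2"
proof -
  note [measurable] = ssum_meas[OF pd]
  define A where "A N = {x\<in>space M. \<exists>k\<in>{m..m+N}. lm \<le> \<bar>ssum d k x - ssum d m x\<bar>}" for N
  have As: "range A \<subseteq> sets M" unfolding A_def by auto
  have inc: "incseq A" unfolding A_def by (intro incseq_SucI) force
  have lim: "(\<lambda>N. prob (A N)) \<longlonglongrightarrow> prob (\<Union>(range A))"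
    by (rule finite_Lim_measure_incseq[OF As inc])
  have sD': "summable (\<lambda>i. (D (i + m))\<^sup>2)" using summable_ignore_initial_segment[OF sD, of m] .
  have bnd: "prob (A N) \<le> B\<^sup>2 * (\<Sum>i. (D (i + m))\<^sup>2) / lm\<^sup>2" for N
  proof -
    have "prob (A N) \<le> B\<^sup>2 * (\<Sum>k\<in>{m..<m+N}. (D k)\<^sup>2) / lm\<^sup>2"
      unfolding A_def by (rule ssum_max[OF pd bd le_add1 lam])
    also have "(\<Sum>k\<in>{m..<m+N}. (D k)\<^sup>2) = (\<Sum>i<N. (D (i + m))\<^sup>2)"
      using sum.atLeastLessThan_shift_0[of "\<lambda>k. (D k)\<^sup>2" m "m+N"]
      by (simp add: atLeast0LessThan comp_def add.commute)
    also have "(\<Sum>i<N. (D (i + m))\<^sup>2) \<le> (\<Sum>i. (D (i + m))\<^sup>2)"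
      by (rule sum_le_suminf[OF sD']) auto
    finally show ?thesis by (simp add: divide_right_mono mult_left_mono)
  qed
  have "prob (\<Union>(range A)) \<le> B\<^sup>2 * (\<Sum>i. (D (i + m))\<^sup>2) / lm\<^sup>2"
    by (rule LIMSEQ_le_const2[OF lim]) (use bnd in auto)
  moreover have "prob {x\<in>space M. \<exists>k\<ge>m. lm < \<bar>ssum d k x - ssum d m x\<bar>} \<le> prob (\<Union>(range A))"
  proof (rule finite_measure_mono)
    show "{x\<in>space M. \<exists>k\<ge>m. lm < \<bar>ssum d k x - ssum d m x\<bar>} \<subseteq> \<Union>(range A)"
    proof
      fix x assume "x \<in> {x\<in>space M. \<exists>k\<ge>m. lm < \<bar>ssum d k x - ssum d m x\<bar>}"
      then obtain k where "x \<in> space M" "k \<ge> m" "lm < \<bar>ssum d k x - ssum d m x\<bar>" by auto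
      then have "x \<in> A (k - m)" unfolding A_def by (intro CollectI conjI bexI[of _ k]) auto
      then show "x \<in> \<Union>(range A)" by auto
    qed
    show "\<Union>(range A) \<in> sets M" using As by auto
  qed
  ultimately show ?thesis by linarith
qed

lemma ssum_conv: assumes pd: "\<And>k. predf k (d k)" and bd: "\<And>k x. x \<in> space M \<Longrightarrow> \<bar>d k x\<bar> \<le> D k"
  and sD: "summable (\<lambda>k. (D k)\<^sup>2)"
  shows "AE x in M. convergent (\<lambda>N. ssum d N x)"
proof -
  note [measurable] = ssum_meas[OF pd]
  define Bad where "Bad j = {x\<in>space M. \<forall>m. \<exists>k\<ge>m. 1 / real (Suc j) < \<bar>ssum d k x - ssum d m x\<bar>}" for j
  have Bs: "Bad j \<in> sets M" for j unfolding Bad_def by measurable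
  have B0: "prob (Bad j) = 0" for j
  proof -
    have tl: "(\<lambda>m. B\<^sup>2 * (\<Sum>i. (D (i + m))\<^sup>2) / (1 / real (Suc j))\<^sup>2) \<longlonglongrightarrow> B\<^sup>2 * 0 / (1 / real (Suc j))\<^sup>2"
    proof -
      have "(\<lambda>m. (\<Sum>i. (D (i + m))\<^sup>2)) \<longlonglongrightarrow> 0" by (rule suminf_exist_split2[OF sD])
      then show ?thesis by (intro tendsto_divide tendsto_mult tendsto_const) simp_all
    qed
    have "prob (Bad j) \<le> B\<^sup>2 * (\<Sum>i. (D (i + m))\<^sup>2) / (1 / real (Suc j))\<^sup>2" for m
    proof -
      have "prob (Bad j) \<le> prob {x\<in>space M. \<exists>k\<ge>m. 1 / real (Suc j) < \<bar>ssum d k x - ssum d m x\<bar>}"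
        by (rule finite_measure_mono) (auto simp: Bad_def)
      also have "\<dots> \<le> B\<^sup>2 * (\<Sum>i. (D (i + m))\<^sup>2) / (1 / real (Suc j))\<^sup>2"
        using ssum_tail[OF pd bd sD, of "1 / real (Suc j)" m] by simp
      finally show ?thesis .
    qed
    then have "prob (Bad j) \<le> 0" using LIMSEQ_le_const[OF tl] by auto
    then show ?thesis using measure_nonneg[of M "Bad j"] by linarith
  qed
  have "AE x in M. x \<notin> Bad j" for j
    by (rule AE_I'[of "Bad j"]) (use Bs B0 in \<open>auto simp: emeasure_eq_measure\<close>)
  then have AEall: "AE x in M. \<forall>j. x \<notin> Bad j" by (simp add: AE_all_countable)
  have imp: "convergent (\<lambda>N. ssum d N x)" if x: "x \<in> space M" and nb: "\<forall>j. x \<notin> Bad j" for x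
  proof -
    have "Cauchy (\<lambda>N. ssum d N x)"
    proof (rule CauchyI)
      fix r :: real assume r: "0 < r"
      obtain j where j: "1 / real (Suc j) < r / 2"
        using reals_Archimedean[of "r/2"] r by (auto simp: inverse_eq_divide simp del: of_nat_Suc)
      obtain m where m: "\<forall>k\<ge>m. \<bar>ssum d k x - ssum d m x\<bar> \<le> 1 / real (Suc j)"
        using nb[rule_format, of j] x unfolding Bad_def by (auto simp: not_less)
      show "\<exists>M. \<forall>a\<ge>M. \<forall>b\<ge>M. norm (ssum d a x - ssum d b x) < r"
      proof (intro exI allI impI)
        fix a b assume "m \<le> a" "m \<le> b"
        then have "\<bar>ssum d a x - ssum d m x\<bar> \<le> 1 / real (Suc j)" "\<bar>ssum d b x - ssum d m x\<bar> \<le> 1 / real (Suc j)"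
          using m by auto
        then show "norm (ssum d a x - ssum d b x) < r" using j by simp
      qed
    qed
    then show "convergent (\<lambda>N. ssum d N x)" by (simp add: Cauchy_convergent_iff)
  qed
  show ?thesis using AEall by (rule AE_mp) (auto intro!: AE_I2 imp)
qed

end


definition gA :: "real^'d^'d \<Rightarrow> real^'d \<Rightarrow> real^'d" where
  "gA A u = A *v u - inner u (A *v u) *\<^sub>R u"

lemma outer_mult: "outer v v *v y = inner v y *\<^sub>R v"
  by (simp add: vec_eq_iff matrix_vector_mult_def outer_def inner_vec_def sum_distrib_left mult_ac)

lemma mat1_outer: "(mat 1 - outer v v) *v y = y - inner v y *\<^sub>R (v::real^'d)"
  by (simp add: matrix_vector_mult_diff_rdistrib outer_mult)

lemma inner_mat_outer: "inner (E *v v) y = inner E (outer y (v::real^'d))"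
  by (simp add: inner_vec_def matrix_vector_mult_def outer_def sum_distrib_right sum_distrib_left mult_ac)

lemma inner_transpose: "inner x (A *v y) = inner (transpose A *v x) (y::real^'d)"
  apply (simp add: inner_vec_def matrix_vector_mult_def transpose_def sum_distrib_left sum_distrib_right)
  apply (subst sum.swap)
  apply (simp add: mult_ac)
  done

lemma inner_sym: assumes "transpose A = A" shows "inner x (A *v y) = inner (A *v x) (y::real^'d)"
  using inner_transpose[of x A y] assms by simp

lemma summable_vec_comp: assumes "\<And>l. summable (\<lambda>n. f n $ l)" shows "summable (f :: nat \<Rightarrow> real^'d)"
proof -
  have "(\<lambda>N. sum f {..<N}) \<longlonglongrightarrow> (\<chi> l. suminf (\<lambda>n. f n $ l))"
  proof (rule vec_tendstoI)
    fix l
    have "(\<lambda>N. \<Sum>n<N. f n $ l) \<longlonglongrightarrow> suminf (\<lambda>n. f n $ l)"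
      using summable_LIMSEQ[OF assms[of l]] .
    then show "(\<lambda>N. sum f {..<N} $ l) \<longlonglongrightarrow> (\<chi> l. suminf (\<lambda>n. f n $ l)) $ l"
      by (simp add: sum_component)
  qed
  then show ?thesis unfolding summable_def sums_def by blast
qed

lemma oja_Suc: "oja_iter a Hs v0 (Suc n) =
  (let v = oja_iter a Hs v0 n; w = v - a n *\<^sub>R gA (Hs n) v in (1 / norm w) *\<^sub>R w)"
  by (simp add: Let_def mat1_outer gA_def scalar_mult_eq_scaleR)

lemma oja_cong: "(\<And>k. k < n \<Longrightarrow> Hs k = Hs' k) \<Longrightarrow> oja_iter a Hs v0 n = oja_iter a Hs' v0 n"
  by (induction n) (auto simp: Let_def)

lemma inner_gA: "norm u = 1 \<Longrightarrow> inner u (gA B u) = 0"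
  by (simp add: gA_def inner_diff_right power2_norm_eq_inner[symmetric])

lemma step_facts:
  fixes u h :: "real^'d"
  assumes u: "norm u = 1" and uh: "inner u h = 0" and c: "0 \<le> c"
  defines "w \<equiv> u - c *\<^sub>R h"
  shows "norm ((1 / norm w) *\<^sub>R w) = 1"
    and "norm ((1 / norm w) *\<^sub>R w - u + c *\<^sub>R h) \<le> c\<^sup>2 * (norm h)\<^sup>2"
    and "norm ((1 / norm w) *\<^sub>R w - u + c *\<^sub>R h) \<le> c * norm h"
proof -
  have w2: "(norm w)\<^sup>2 = 1 + c\<^sup>2 * (norm h)\<^sup>2"
  proof -
    have "(norm w)\<^sup>2 = inner w w" by (simp add: power2_norm_eq_inner)
    also have "\<dots> = inner u u - 2 * c * inner u h + c\<^sup>2 * inner h h"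
      unfolding w_def by (simp add: inner_diff_left inner_diff_right inner_commute power2_eq_square algebra_simps)
    also have "\<dots> = 1 + c\<^sup>2 * (norm h)\<^sup>2" using u uh by (simp add: power2_norm_eq_inner[symmetric])
    finally show ?thesis .
  qed
  have w1: "1 \<le> norm w"
  proof -
    have "1 \<le> (norm w)\<^sup>2" using w2 by (simp add: zero_le_mult_iff)
    then show ?thesis using power2_le_imp_le[of 1 "norm w"] by simp
  qed
  have w0: "w \<noteq> 0"
  proof
    assume "w = 0" then show False using w1 by simp
  qed
  then show "norm ((1 / norm w) *\<^sub>R w) = 1" by simp
  have rho: "(1 / norm w) *\<^sub>R w - u + c *\<^sub>R h = (1 / norm w - 1) *\<^sub>R w"
    unfolding w_def by (simp add: algebra_simps)
  have wnz: "norm w \<noteq> 0" using w0 by simp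
  have t1: "1 / norm w \<le> 1" using w1 by (simp add: divide_le_eq)
  have nr: "norm ((1 / norm w - 1) *\<^sub>R w) = norm w - 1"
  proof -
    have "norm ((1 / norm w - 1) *\<^sub>R w) = \<bar>1 / norm w - 1\<bar> * norm w" by simp
    also have "\<bar>1 / norm w - 1\<bar> = 1 - 1 / norm w" using t1 by simp
    also have "(1 - 1 / norm w) * norm w = norm w - 1" using wnz by (simp add: left_diff_distrib)
    finally show ?thesis .
  qed
  have "norm w * 1 \<le> norm w * norm w" using w1 by (intro mult_left_mono) auto
  then have "norm w - 1 \<le> (norm w)\<^sup>2 - 1" by (simp add: power2_eq_square)
  then show "norm ((1 / norm w) *\<^sub>R w - u + c *\<^sub>R h) \<le> c\<^sup>2 * (norm h)\<^sup>2"
    using rho nr w2 by simp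
  have "norm w \<le> norm u + norm (c *\<^sub>R h)" unfolding w_def by (rule norm_triangle_ineq4)
  then have "norm w - 1 \<le> c * norm h" using u c by simp
  then show "norm ((1 / norm w) *\<^sub>R w - u + c *\<^sub>R h) \<le> c * norm h"
    using rho nr by simp
qed


lemma partial_bounded: assumes "summable (f :: nat \<Rightarrow> real)" obtains K where "\<And>N. \<bar>\<Sum>n<N. f n\<bar> \<le> K"
proof -
  have "Bseq (\<lambda>N. \<Sum>n<N. f n)"
    using assms by (intro convergent_imp_Bseq) (simp add: summable_iff_convergent)
  then obtain K where "\<And>N. norm (\<Sum>n<N. f n) \<le> K" by (metis BseqE)
  then show ?thesis by (intro that[of K]) simp
qed

lemma det_main:
  fixes A :: "real^'d^'d" and Hs :: "nat \<Rightarrow> real^'d^'d" and a :: "nat \<Rightarrow> real"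
  assumes symA: "transpose A = A" and v0: "norm v0 = 1"
    and apos: "\<And>n. 0 < a n" and nsum: "\<not> summable a" and sq: "summable (\<lambda>n. (a n)\<^sup>2)"
    and Gb: "\<And>n u. norm u = 1 \<Longrightarrow> norm (Hs n *v u) \<le> G"
    and noise1: "\<And>l. summable (\<lambda>n. a n * (gA (Hs n) (oja_iter a Hs v0 n) - gA A (oja_iter a Hs v0 n)) $ l)"
    and noise2: "summable (\<lambda>n. a n * inner (gA A (oja_iter a Hs v0 n)) (gA (Hs n) (oja_iter a Hs v0 n) - gA A (oja_iter a Hs v0 n)))"
  shows "(\<lambda>n. gA A (oja_iter a Hs v0 n)) \<longlonglongrightarrow> 0"
proof -
  define v where "v n = oja_iter a Hs v0 n" for n
  define g where "g n = gA A (v n)" for n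
  define h where "h n = gA (Hs n) (v n)" for n
  define \<xi> where "\<xi> n = h n - g n" for n
  define f where "f u = inner u (A *v u)" for u
  define \<Delta> where "\<Delta> n = v (Suc n) - v n" for n
  define \<rho> where "\<rho> n = \<Delta> n + a n *\<^sub>R h n" for n
  have vS: "v (Suc n) = (1 / norm (v n - a n *\<^sub>R h n)) *\<^sub>R (v n - a n *\<^sub>R h n)" for n
    unfolding v_def h_def by (subst oja_Suc) (simp add: Let_def)
  have unit: "norm (v n) = 1" for n
  proof (induction n)
    case 0 then show ?case using v0 by (simp add: v_def)
  next
    case (Suc n)
    show ?case unfolding vS h_def
      by (rule step_facts(1)[OF Suc inner_gA[OF Suc] less_imp_le[OF apos]])
  qed
  have vh: "inner (v n) (h n) = 0" for n unfolding h_def by (rule inner_gA[OF unit])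
  have G0: "0 \<le> G" using Gb[OF v0, of 0] norm_ge_zero[of "Hs 0 *v v0"] by linarith
  define Hc where "Hc = 2 * G"
  have hb: "norm (h n) \<le> Hc" for n
  proof -
    have "\<bar>inner (v n) (Hs n *v v n)\<bar> \<le> norm (v n) * norm (Hs n *v v n)" by (rule Cauchy_Schwarz_ineq2)
    then have i: "\<bar>inner (v n) (Hs n *v v n)\<bar> \<le> G" using unit[of n] Gb[OF unit[of n], of n] by simp
    have "norm (h n) \<le> norm (Hs n *v v n) + norm (inner (v n) (Hs n *v v n) *\<^sub>R v n)"
      unfolding h_def gA_def by (rule norm_triangle_ineq4)
    also have "\<dots> \<le> G + G" using i Gb[OF unit[of n], of n] unit[of n] by simp
    finally show ?thesis by (simp add: Hc_def)
  qed
  have hb2: "(norm (h n))\<^sup>2 \<le> Hc\<^sup>2" for n using hb[of n] by (intro power_mono) auto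
  obtain KA where KA: "KA > 0" "\<And>u. norm (A *v u) \<le> norm u * KA"
    using bounded_linear.pos_bounded[OF matrix_vector_mul_bounded_linear[of A]] by blast
  have rho1: "norm (\<rho> n) \<le> (a n)\<^sup>2 * (norm (h n))\<^sup>2" and rho2: "norm (\<rho> n) \<le> a n * norm (h n)" for n
  proof -
    have e: "\<rho> n = (1 / norm (v n - a n *\<^sub>R h n)) *\<^sub>R (v n - a n *\<^sub>R h n) - v n + a n *\<^sub>R h n"
      unfolding \<rho>_def \<Delta>_def vS by simp
    show "norm (\<rho> n) \<le> (a n)\<^sup>2 * (norm (h n))\<^sup>2" unfolding e
      by (rule step_facts(2)[OF unit vh less_imp_le[OF apos]])
    show "norm (\<rho> n) \<le> a n * norm (h n)" unfolding e
      by (rule step_facts(3)[OF unit vh less_imp_le[OF apos]])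
  qed
  have rho3: "norm (\<rho> n) \<le> Hc\<^sup>2 * (a n)\<^sup>2" for n
    using rho1[of n] mult_left_mono[OF hb2[of n], of "(a n)\<^sup>2"] by (simp add: mult_ac)
  have Db: "norm (\<Delta> n) \<le> 2 * a n * Hc" for n
  proof -
    have "\<Delta> n = \<rho> n - a n *\<^sub>R h n" unfolding \<rho>_def by simp
    then have "norm (\<Delta> n) \<le> norm (\<rho> n) + norm (a n *\<^sub>R h n)" using norm_triangle_ineq4[of "\<rho> n" "a n *\<^sub>R h n"] by simp
    also have "\<dots> \<le> a n * norm (h n) + a n * norm (h n)" using rho2[of n] apos[of n] by simp
    also have "\<dots> \<le> 2 * a n * Hc" using mult_left_mono[OF hb[of n], of "a n"] apos[of n] by simp
    finally show ?thesis .
  qed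
  define err where "err n = f (v (Suc n)) - f (v n) + 2 * a n * (norm (g n))\<^sup>2 + 2 * a n * inner (g n) (\<xi> n)" for n
  have err_eq: "err n = 2 * inner (A *v v n) (\<rho> n) + inner (\<Delta> n) (A *v \<Delta> n)" for n
  proof -
    have vs: "v (Suc n) = v n + \<Delta> n" unfolding \<Delta>_def by simp
    have "f (v (Suc n)) - f (v n) = 2 * inner (A *v v n) (\<Delta> n) + inner (\<Delta> n) (A *v \<Delta> n)"
    proof -
      have e1: "inner (v n + \<Delta> n) (A *v (v n + \<Delta> n)) = inner (v n) (A *v v n) + inner (v n) (A *v \<Delta> n) + inner (\<Delta> n) (A *v v n) + inner (\<Delta> n) (A *v \<Delta> n)"
        by (simp add: matrix_vector_right_distrib inner_add_left inner_add_right)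
      have e2: "inner (v n) (A *v \<Delta> n) = inner (A *v v n) (\<Delta> n)" by (rule inner_sym[OF symA])
      have e3: "inner (\<Delta> n) (A *v v n) = inner (A *v v n) (\<Delta> n)" by (rule inner_commute)
      show ?thesis unfolding f_def vs e1 e2 e3 by simp
    qed
    moreover have "inner (A *v v n) (\<Delta> n) = inner (A *v v n) (\<rho> n) - a n * ((norm (g n))\<^sup>2 + inner (g n) (\<xi> n))"
    proof -
      have "inner (A *v v n) (h n) = inner (g n + inner (v n) (A *v v n) *\<^sub>R v n) (h n)"
        unfolding g_def gA_def by simp
      also have "\<dots> = inner (g n) (h n)" using vh[of n] by (simp add: inner_add_left)
      finally have "inner (A *v v n) (h n) = inner (g n) (h n)" .
      also have "\<dots> = (norm (g n))\<^sup>2 + inner (g n) (\<xi> n)"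
        unfolding \<xi>_def by (simp add: inner_diff_right power2_norm_eq_inner)
      finally have "inner (A *v v n) (h n) = (norm (g n))\<^sup>2 + inner (g n) (\<xi> n)" .
      moreover have "\<Delta> n = \<rho> n - a n *\<^sub>R h n" unfolding \<rho>_def by simp
      ultimately show ?thesis by (simp add: inner_diff_right)
    qed
    ultimately show ?thesis unfolding err_def by (simp add: algebra_simps)
  qed
  define Ce where "Ce = 6 * KA * Hc\<^sup>2"
  have errb: "\<bar>err n\<bar> \<le> Ce * (a n)\<^sup>2" for n
  proof -
    have Av: "norm (A *v v n) \<le> KA" using KA(2)[of "v n"] unit[of n] by simp
    have t1: "\<bar>inner (A *v v n) (\<rho> n)\<bar> \<le> KA * (Hc\<^sup>2 * (a n)\<^sup>2)"
    proof -
      have "\<bar>inner (A *v v n) (\<rho> n)\<bar> \<le> norm (A *v v n) * norm (\<rho> n)" by (rule Cauchy_Schwarz_ineq2)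
      also have "\<dots> \<le> KA * (Hc\<^sup>2 * (a n)\<^sup>2)" by (rule mult_mono[OF Av rho3]) (use KA in auto)
      finally show ?thesis .
    qed
    have t2: "\<bar>inner (\<Delta> n) (A *v \<Delta> n)\<bar> \<le> KA * (2 * a n * Hc)\<^sup>2"
    proof -
      have "\<bar>inner (\<Delta> n) (A *v \<Delta> n)\<bar> \<le> norm (\<Delta> n) * norm (A *v \<Delta> n)" by (rule Cauchy_Schwarz_ineq2)
      also have "\<dots> \<le> norm (\<Delta> n) * (norm (\<Delta> n) * KA)" by (rule mult_left_mono[OF KA(2)]) simp
      also have "\<dots> = KA * (norm (\<Delta> n))\<^sup>2" by (simp add: power2_eq_square mult_ac)
      also have "\<dots> \<le> KA * (2 * a n * Hc)\<^sup>2"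
        by (rule mult_left_mono[OF power_mono[OF Db]]) (use KA in auto)
      finally show ?thesis .
    qed
    have "\<bar>err n\<bar> \<le> 2 * \<bar>inner (A *v v n) (\<rho> n)\<bar> + \<bar>inner (\<Delta> n) (A *v \<Delta> n)\<bar>"
      unfolding err_eq by simp
    also have "\<dots> \<le> 2 * (KA * (Hc\<^sup>2 * (a n)\<^sup>2)) + KA * (2 * a n * Hc)\<^sup>2" using t1 t2 by simp
    also have "\<dots> = Ce * (a n)\<^sup>2" by (simp add: Ce_def power2_eq_square algebra_simps)
    finally show ?thesis .
  qed
  define q where "q n = a n * (norm (g n))\<^sup>2" for n
  have q0: "0 \<le> q n" for n unfolding q_def using apos[of n] by simp
  have sErr: "summable err"
    by (rule summable_comparison_test'[where N=0, OF summable_mult[OF sq, of Ce]]) (use errb in auto)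
  have n2: "summable (\<lambda>n. a n * inner (g n) (\<xi> n))"
    using noise2 unfolding g_def \<xi>_def h_def v_def .
  obtain K1 where K1: "\<And>N. \<bar>\<Sum>n<N. a n * inner (g n) (\<xi> n)\<bar> \<le> K1" using partial_bounded[OF n2] by blast
  obtain K2 where K2: "\<And>N. \<bar>\<Sum>n<N. err n\<bar> \<le> K2" using partial_bounded[OF sErr] by blast
  have fb: "\<bar>f (v n)\<bar> \<le> KA" for n
  proof -
    have "\<bar>f (v n)\<bar> \<le> norm (v n) * norm (A *v v n)" unfolding f_def by (rule Cauchy_Schwarz_ineq2)
    then show ?thesis using KA(2)[of "v n"] unit[of n] by simp
  qed
  have sq_g: "summable q"
  proof (rule summableI_nonneg_bounded[OF q0])
    fix N
    have qe: "q n = (f (v n) - f (v (Suc n))) / 2 - a n * inner (g n) (\<xi> n) + err n / 2" for n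
      unfolding q_def err_def by (simp add: field_simps)
    have "(\<Sum>n<N. q n) = (\<Sum>n<N. (f (v n) - f (v (Suc n))) / 2 - a n * inner (g n) (\<xi> n) + err n / 2)"
      using qe by simp
    also have "\<dots> = (\<Sum>n<N. (f (v n) - f (v (Suc n))) / 2) - (\<Sum>n<N. a n * inner (g n) (\<xi> n)) + (\<Sum>n<N. err n / 2)"
      by (simp only: sum.distrib sum_subtractf)
    also have "(\<Sum>n<N. (f (v n) - f (v (Suc n))) / 2) = (\<Sum>n<N. f (v n) - f (v (Suc n))) / 2"
      by (rule sum_divide_distrib[symmetric])
    also have "(\<Sum>n<N. f (v n) - f (v (Suc n))) = f (v 0) - f (v N)"
      by (rule sum_lessThan_telescope')
    also have "(\<Sum>n<N. err n / 2) = (\<Sum>n<N. err n) / 2"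
      by (rule sum_divide_distrib[symmetric])
    also have "(f (v 0) - f (v N)) / 2 - (\<Sum>n<N. a n * inner (g n) (\<xi> n)) + (\<Sum>n<N. err n) / 2 \<le> KA + K1 + K2 / 2"
      using abs_le_D1[OF fb[of 0]] abs_le_D2[OF fb[of N]] abs_le_D2[OF K1[of N]] abs_le_D1[OF K2[of N]] by (simp add: field_simps)
    finally show "sum q {..<N} \<le> KA + K1 + K2 / 2" .
  qed
  have freq: "\<exists>k\<ge>N. norm (g k) < \<epsilon>" if eps: "\<epsilon> > 0" for \<epsilon> N
  proof (rule ccontr)
    assume "\<not> (\<exists>k\<ge>N. norm (g k) < \<epsilon>)"
    then have ge: "\<And>k. k \<ge> N \<Longrightarrow> \<epsilon> \<le> norm (g k)" by (auto simp: not_less)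
    have "summable a"
    proof (rule summable_comparison_test'[where N=N])
      show "summable (\<lambda>k. q k / \<epsilon>\<^sup>2)" using sq_g by (rule summable_divide)
      fix k assume k: "N \<le> k"
      have "\<epsilon>\<^sup>2 \<le> (norm (g k))\<^sup>2" using ge[OF k] eps by (intro power_mono) auto
      then have "a k * \<epsilon>\<^sup>2 \<le> q k" unfolding q_def using apos[of k] by (intro mult_left_mono) auto
      moreover have "norm (a k) = a k" using apos[of k] by simp
      ultimately show "norm (a k) \<le> q k / \<epsilon>\<^sup>2" using eps by (simp add: pos_le_divide_eq)
    qed
    then show False using nsum by simp
  qed
  have sxi: "summable (\<lambda>n. a n *\<^sub>R \<xi> n)"
    by (rule summable_vec_comp) (use noise1 in \<open>simp add: \<xi>_def h_def g_def v_def\<close>)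
  have ucont: "uniformly_continuous_on (sphere 0 1) (gA A)"
  proof (rule compact_uniformly_continuous[OF _ compact_sphere])
    show "continuous_on (sphere 0 1) (gA A)" unfolding gA_def by (intro continuous_intros)
  qed
  have "g \<longlonglongrightarrow> 0"
  proof (rule LIMSEQ_I)
    fix r :: real assume r: "0 < r"
    define \<epsilon> where "\<epsilon> = r / 2"
    have eps: "0 < \<epsilon>" using r by (simp add: \<epsilon>_def)
    obtain \<delta> where dl: "0 < \<delta>"
      and dU: "\<And>x x'. x \<in> sphere 0 1 \<Longrightarrow> x' \<in> sphere 0 1 \<Longrightarrow> dist x' x < \<delta> \<Longrightarrow> dist (gA A x') (gA A x) < \<epsilon>"
      using ucont[unfolded uniformly_continuous_on_def, rule_format, OF eps] by metis
    have p1: "0 < \<epsilon> * \<delta> / 3" using eps dl by simp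
    have p2: "0 < \<delta> / 3" using dl by simp
    obtain N1 where N1: "\<And>m n. m \<ge> N1 \<Longrightarrow> norm (sum q {m..<n}) < \<epsilon> * \<delta> / 3"
      using sq_g[unfolded summable_Cauchy, rule_format, OF p1] by metis
    obtain N2 where N2: "\<And>m n. m \<ge> N2 \<Longrightarrow> norm (sum (\<lambda>n. a n *\<^sub>R \<xi> n) {m..<n}) < \<delta> / 3"
      using sxi[unfolded summable_Cauchy, rule_format, OF p2] by metis
    have sq2: "summable (\<lambda>n. Hc\<^sup>2 * (a n)\<^sup>2)" by (rule summable_mult[OF sq])
    obtain N3 where N3: "\<And>m n. m \<ge> N3 \<Longrightarrow> norm (sum (\<lambda>n. Hc\<^sup>2 * (a n)\<^sup>2) {m..<n}) < \<delta> / 3"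
      using sq2[unfolded summable_Cauchy, rule_format, OF p2] by metis
    show "\<exists>no. \<forall>n\<ge>no. norm (g n - 0) < r"
    proof (intro exI allI impI)
      fix n assume n: "max N1 (max N2 N3) \<le> n"
      show "norm (g n - 0) < r"
      proof (rule ccontr)
        assume "\<not> norm (g n - 0) < r"
        then have big: "2 * \<epsilon> \<le> norm (g n)" by (simp add: \<epsilon>_def)
        define P where "P k \<longleftrightarrow> n \<le> k \<and> norm (g k) < \<epsilon>" for k
        define k where "k = (LEAST k. P k)"
        have "\<exists>k. P k" using freq[OF eps, of n] unfolding P_def by blast
        then have kP: "P k" unfolding k_def by (rule LeastI_ex)
        have kbig: "\<epsilon> \<le> norm (g j)" if "n \<le> j" "j < k" for j
          using not_less_Least[OF that(2)[unfolded k_def]] that(1) unfolding P_def by auto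
        have nk: "n \<le> k" using kP unfolding P_def by simp
        have tel: "v k - v n = (\<Sum>j\<in>{n..<k}. \<Delta> j)"
          using sum_Suc_diff'[OF nk, of v] unfolding \<Delta>_def by simp
        have De: "\<Delta> j = \<rho> j - a j *\<^sub>R g j - a j *\<^sub>R \<xi> j" for j
          unfolding \<rho>_def \<xi>_def by (simp add: algebra_simps)
        have eqv: "v k - v n = (\<Sum>j\<in>{n..<k}. \<rho> j) - (\<Sum>j\<in>{n..<k}. a j *\<^sub>R g j) - (\<Sum>j\<in>{n..<k}. a j *\<^sub>R \<xi> j)"
          unfolding tel De by (simp add: sum_subtractf)
        have "norm (v k - v n) \<le> norm (\<Sum>j\<in>{n..<k}. \<rho> j) + norm (\<Sum>j\<in>{n..<k}. a j *\<^sub>R g j) + norm (\<Sum>j\<in>{n..<k}. a j *\<^sub>R \<xi> j)"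
          using norm_triangle_ineq4[of "(\<Sum>j\<in>{n..<k}. \<rho> j) - (\<Sum>j\<in>{n..<k}. a j *\<^sub>R g j)" "\<Sum>j\<in>{n..<k}. a j *\<^sub>R \<xi> j"]
            norm_triangle_ineq4[of "\<Sum>j\<in>{n..<k}. \<rho> j" "\<Sum>j\<in>{n..<k}. a j *\<^sub>R g j"]
          unfolding eqv by linarith
        moreover have "norm (\<Sum>j\<in>{n..<k}. \<rho> j) < \<delta> / 3"
        proof -
          have "norm (\<Sum>j\<in>{n..<k}. \<rho> j) \<le> (\<Sum>j\<in>{n..<k}. norm (\<rho> j))" by (rule norm_sum)
          also have "\<dots> \<le> (\<Sum>j\<in>{n..<k}. Hc\<^sup>2 * (a j)\<^sup>2)" by (rule sum_mono[OF rho3])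
          also have "\<dots> = norm (\<Sum>j\<in>{n..<k}. Hc\<^sup>2 * (a j)\<^sup>2)" by (simp add: sum_nonneg)
          also have "\<dots> < \<delta> / 3" using N3 n by simp
          finally show ?thesis .
        qed
        moreover have "norm (\<Sum>j\<in>{n..<k}. a j *\<^sub>R g j) < \<delta> / 3"
        proof -
          have "norm (\<Sum>j\<in>{n..<k}. a j *\<^sub>R g j) \<le> (\<Sum>j\<in>{n..<k}. norm (a j *\<^sub>R g j))" by (rule norm_sum)
          also have "\<dots> \<le> (\<Sum>j\<in>{n..<k}. q j / \<epsilon>)"
          proof (rule sum_mono)
            fix j assume j: "j \<in> {n..<k}"
            have e1: "\<epsilon> \<le> norm (g j)" using kbig j by auto
            have "a j * norm (g j) * \<epsilon> \<le> a j * norm (g j) * norm (g j)"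
              using e1 apos[of j] by (intro mult_left_mono) auto
            then have "a j * norm (g j) * \<epsilon> \<le> q j" unfolding q_def by (simp add: power2_eq_square mult_ac)
            then show "norm (a j *\<^sub>R g j) \<le> q j / \<epsilon>" using apos[of j] eps by (simp add: pos_le_divide_eq)
          qed
          also have "\<dots> = (\<Sum>j\<in>{n..<k}. q j) / \<epsilon>" by (rule sum_divide_distrib[symmetric])
          also have "\<dots> < \<delta> / 3"
          proof -
            have "(\<Sum>j\<in>{n..<k}. q j) < \<epsilon> * \<delta> / 3" using N1[of n k] n by simp
            then show ?thesis using eps by (simp add: divide_less_eq mult_ac)
          qed
          finally show ?thesis .
        qed
        moreover have "norm (\<Sum>j\<in>{n..<k}. a j *\<^sub>R \<xi> j) < \<delta> / 3" using N2[of n k] n by simp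
        ultimately have "dist (v k) (v n) < \<delta>" by (simp add: dist_norm)
        then have "dist (gA A (v k)) (gA A (v n)) < \<epsilon>" using unit by (intro dU) auto
        then have "dist (g k) (g n) < \<epsilon>" by (simp add: g_def)
        moreover have "norm (g k) < \<epsilon>" using kP unfolding P_def by simp
        moreover have "norm (g n) \<le> norm (g k) + dist (g k) (g n)"
          using norm_triangle_ineq2[of "g n" "g k"] by (simp add: dist_norm norm_minus_commute)
        ultimately show False using big by linarith
      qed
    qed
  qed
  moreover have "g = (\<lambda>n. gA A (oja_iter a Hs v0 n))" by (simp add: fun_eq_iff g_def v_def)
  ultimately show ?thesis by simp
qed



lemma norm_vec_le_sum: "norm (x::'a::real_normed_vector^'n) \<le> (\<Sum>i\<in>UNIV. norm (x$i))"
  unfolding norm_vec_def by (rule L2_set_le_sum) simp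

lemma inner_noise: "inner (gA Mx u - gA A u) y =
  (\<Sum>i\<in>UNIV. \<Sum>j\<in>UNIV. (Mx - A)$i$j * (outer y u - inner u y *\<^sub>R outer u u)$i$j)"
proof -
  have "gA Mx u - gA A u = (Mx - A) *v u - inner u ((Mx - A) *v u) *\<^sub>R u"
    by (simp add: gA_def matrix_vector_mult_diff_rdistrib inner_diff_right algebra_simps)
  then have "inner (gA Mx u - gA A u) y = inner ((Mx - A) *v u) y - inner u ((Mx - A) *v u) * inner u y"
    by (simp add: inner_diff_left)
  also have "\<dots> = inner (Mx - A) (outer y u) - inner (Mx - A) (outer u u) * inner u y"
    using inner_mat_outer[of "Mx - A" u y] inner_mat_outer[of "Mx - A" u u] by (simp add: inner_commute)
  also have "\<dots> = inner (Mx - A) (outer y u - inner u y *\<^sub>R outer u u)"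
    by (simp add: inner_diff_right)
  also have "\<dots> = (\<Sum>i\<in>UNIV. \<Sum>j\<in>UNIV. (Mx - A)$i$j * (outer y u - inner u y *\<^sub>R outer u u)$i$j)"
    by (simp add: inner_vec_def)
  finally show ?thesis .
qed

lemma cont_gA2: "continuous_on UNIV (\<lambda>p::((real^'d^'d) \<times> (real^'d)). gA (fst p) (snd p))"
  unfolding gA_def matrix_vector_mult_def by (intro continuous_intros)

lemma cont_gA: "continuous_on S (gA A)"
  unfolding gA_def by (intro continuous_intros)

lemma cont_outer: "continuous_on S (\<lambda>u. f u) \<Longrightarrow> continuous_on S (\<lambda>u. g u) \<Longrightarrow> continuous_on S (\<lambda>u. outer (f u) (g u))"
  unfolding outer_def by (intro continuous_intros)

lemma AE_all_finite_type: "(\<And>i::'i::finite. AE x in M. Q i x) \<Longrightarrow> AE x in M. \<forall>i. Q i x"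
  using AE_finite_all[of "UNIV :: 'i set" "\<lambda>x i. Q i x" "ae_filter M"] by simp

lemma oja_unit: "norm v0 = 1 \<Longrightarrow> (\<And>n. 0 \<le> a n) \<Longrightarrow> norm (oja_iter a Hs v0 n) = 1"
proof (induction n)
  case 0 then show ?case by simp
next
  case (Suc n)
  show ?case unfolding oja_Suc Let_def
    by (rule step_facts(1)[OF Suc.IH[OF Suc.prems] inner_gA[OF Suc.IH[OF Suc.prems]] Suc.prems(2)])
qed

locale oja = prob_space M for M :: "'a measure" +
  fixes P :: "'w measure" and W :: "nat \<Rightarrow> 'a \<Rightarrow> 'w" and H :: "'w \<Rightarrow> real^'d^'d"
    and Hbar :: "real^'d^'d" and \<alpha> :: "nat \<Rightarrow> real" and G1 :: real and v0 :: "real^'d"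
  assumes PP: "prob_space P" and Wm: "\<And>n. W n \<in> measurable M P"
    and ind: "indep_vars (\<lambda>_. P) W UNIV" and distrW: "\<And>n. distr M P (W n) = P"
    and symA: "transpose Hbar = Hbar"
    and Hm: "H \<in> borel_measurable P" and HbarI: "integral\<^sup>L P H = Hbar"
    and Hb: "\<forall>w\<in>space P. opnorm2 (H w) \<le> G1"
    and apos: "\<And>n. \<alpha> n > 0" and nsum: "\<not> summable \<alpha>" and sq: "summable (\<lambda>n. (\<alpha> n)^2)"
    and v0: "norm v0 = 1"
begin

definition V :: "nat \<Rightarrow> (nat \<Rightarrow> 'w) \<Rightarrow> real^'d" where "V n f = oja_iter \<alpha> (\<lambda>k. H (f k)) v0 n"

lemma V_unit: "norm (V n f) = 1"
  unfolding V_def by (rule oja_unit[OF v0]) (use apos in \<open>auto intro: less_imp_le\<close>)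

lemma V_meas: "V n \<in> borel_measurable (PiM {..<n} (\<lambda>_. P))"
proof (induction n)
  case 0
  then show ?case by (simp add: V_def)
next
  case (Suc n)
  have m1: "(\<lambda>f. V n f) \<in> borel_measurable (PiM {..<Suc n} (\<lambda>_. P))"
  proof -
    have "(\<lambda>f. V n (restrict f {..<n})) \<in> borel_measurable (PiM {..<Suc n} (\<lambda>_. P))"
      by (rule measurable_compose[OF measurable_restrict_subset Suc.IH]) auto
    moreover have "V n (restrict f {..<n}) = V n f" for f
      unfolding V_def by (rule oja_cong) auto
    ultimately show ?thesis by simp
  qed
  have m2: "(\<lambda>f. H (f n)) \<in> borel_measurable (PiM {..<Suc n} (\<lambda>_. P))"
    by (rule measurable_compose[OF measurable_component_singleton[of n "{..<Suc n}" "\<lambda>_. P"] Hm]) auto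
  have gm: "(\<lambda>p::((real^'d^'d) \<times> (real^'d)). gA (fst p) (snd p)) \<in> borel_measurable (borel \<Otimes>\<^sub>M borel)"
    unfolding borel_prod by (rule borel_measurable_continuous_onI[OF cont_gA2])
  have m3: "(\<lambda>f. gA (H (f n)) (V n f)) \<in> borel_measurable (PiM {..<Suc n} (\<lambda>_. P))"
    using measurable_compose[OF measurable_Pair[OF m2 m1] gm] by simp
  have e: "V (Suc n) f = (1 / norm (V n f - \<alpha> n *\<^sub>R gA (H (f n)) (V n f))) *\<^sub>R (V n f - \<alpha> n *\<^sub>R gA (H (f n)) (V n f))" for f
    unfolding V_def by (subst oja_Suc) (simp add: Let_def)
  show ?case unfolding e using m1 m3 by measurable
qed

lemma HvB: "w \<in> space P \<Longrightarrow> norm (H w *v u) \<le> G1 * norm u"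
proof -
  assume w: "w \<in> space P"
  have "norm (H w *v u) \<le> onorm (\<lambda>x. H w *v x) * norm u"
    by (rule onorm) (rule matrix_vector_mul_bounded_linear)
  also have "\<dots> \<le> G1 * norm u"
    using Hb w unfolding opnorm2_def by (intro mult_right_mono) auto
  finally show ?thesis .
qed

lemma Hent: "w \<in> space P \<Longrightarrow> \<bar>H w $ i $ j\<bar> \<le> G1"
proof -
  assume w: "w \<in> space P"
  have "H w $ i $ j = (H w *v axis j 1) $ i" by (simp add: matrix_vector_mult_basis column_def)
  then have "\<bar>H w $ i $ j\<bar> \<le> norm (H w *v axis j 1)" using component_le_norm_cart by metis
  also have "\<dots> \<le> G1" using HvB[OF w, of "axis j 1"] by simp
  finally show ?thesis .
qed

lemma Hint: "integrable P H"
proof (rule finite_measure.integrable_const_bound[where B="real CARD('d) * (real CARD('d) * G1)"])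
  show "finite_measure P" using PP by (simp add: prob_space_def)
  show "AE x in P. norm (H x) \<le> real CARD('d) * (real CARD('d) * G1)"
  proof (rule AE_I2)
    fix w assume w: "w \<in> space P"
    have "norm (H w) \<le> (\<Sum>i\<in>UNIV. norm (H w $ i))" by (rule norm_vec_le_sum)
    also have "\<dots> \<le> (\<Sum>i\<in>(UNIV::'d set). real CARD('d) * G1)"
    proof (rule sum_mono)
      fix i
      have "norm (H w $ i) \<le> (\<Sum>j\<in>UNIV. norm (H w $ i $ j))" by (rule norm_vec_le_sum)
      also have "\<dots> \<le> (\<Sum>j\<in>(UNIV::'d set). G1)" by (rule sum_mono) (use Hent[OF w] in simp)
      finally show "norm (H w $ i) \<le> real CARD('d) * G1" by simp
    qed
    finally show "norm (H w) \<le> real CARD('d) * (real CARD('d) * G1)" by simp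
  qed
qed (rule Hm)

lemma bl_ij: "bounded_linear (\<lambda>X::real^'d^'d. X $ i $ j)"
  using bounded_linear_compose[OF bounded_linear_vec_nth[of j] bounded_linear_vec_nth[of i]] by simp

lemma Hent_int: "integral\<^sup>L P (\<lambda>w. H w $ i $ j) = Hbar $ i $ j"
proof -
  note bl = bl_ij[of i j]
  show ?thesis using integral_bounded_linear[OF bl Hint] HbarI by simp
qed

lemma noise_term:
  assumes phic: "continuous_on UNIV \<phi>"
  shows "AE x in M. summable (\<lambda>n. \<alpha> n * \<phi> (V n (\<lambda>k. W k x)) * (H (W n x) - Hbar) $ i $ j)"
proof -
  define e where "e w = (H w - Hbar) $ i $ j" for w
  have em: "e \<in> borel_measurable P"
    proof -
      have c: "continuous_on UNIV (\<lambda>X::real^'d^'d. (X - Hbar) $ i $ j)" by (intro continuous_intros)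
      show ?thesis unfolding e_def by (rule measurable_compose[OF Hm borel_measurable_continuous_onI[OF c]])
    qed
  have eB: "\<And>w. w \<in> space P \<Longrightarrow> \<bar>e w\<bar> \<le> G1 + \<bar>Hbar $ i $ j\<bar>"
      unfolding e_def using Hent by (simp add: abs_diff_le_iff) (smt (verit) abs_le_iff)
  have e0: "integral\<^sup>L P e = 0"
    proof -
      have i1: "integrable P (\<lambda>w. H w $ i $ j)"
        by (rule integrable_bounded_linear[OF bl_ij Hint])
      have i2: "integrable P (\<lambda>w. Hbar $ i $ j)"
        using PP by (simp add: prob_space_def finite_measure.integrable_const)
      have "integral\<^sup>L P e = integral\<^sup>L P (\<lambda>w. H w $ i $ j) - integral\<^sup>L P (\<lambda>w. Hbar $ i $ j)"
        unfolding e_def by (simp add: Bochner_Integration.integral_diff[OF i1 i2] prob_space.prob_space[OF PP])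
      also have "\<dots> = 0" using Hent_int prob_space.prob_space[OF PP] by simp
      finally show ?thesis .
    qed
  interpret E: mgsetup M P W e "G1 + \<bar>Hbar $ i $ j\<bar>"
    unfolding mgsetup_def mgsetup_axioms_def using prob_space_axioms PP Wm ind distrW em eB e0 by blast
  obtain C where C: "\<And>u. norm u = 1 \<Longrightarrow> \<bar>\<phi> u\<bar> \<le> C"
  proof -
    have "compact (\<phi> ` sphere 0 1)"
      by (rule compact_continuous_image[OF continuous_on_subset[OF phic] compact_sphere]) auto
    then obtain C where "\<forall>y\<in>\<phi> ` sphere 0 1. norm y \<le> C" using compact_imp_bounded bounded_iff by metis
    then have "\<And>u. norm u = 1 \<Longrightarrow> \<bar>\<phi> u\<bar> \<le> C" by auto
    then show ?thesis by (rule that)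
  qed
  define d where "d k x = \<alpha> k * \<phi> (V k (\<lambda>m. W m x))" for k x
  have pd: "E.predf k (d k)" for k
    unfolding E.predf_def
  proof (rule bexI[of _ "\<lambda>f. \<alpha> k * \<phi> (V k f)"])
    show "(\<lambda>f. \<alpha> k * \<phi> (V k f)) \<in> borel_measurable (Pi\<^sub>M {..<k} (\<lambda>_. P))"
      using measurable_compose[OF V_meas borel_measurable_continuous_onI[OF phic]] by measurable
    show "\<forall>x\<in>space M. d k x = \<alpha> k * \<phi> (V k (\<lambda>i\<in>{..<k}. W i x))"
      unfolding d_def V_def by (auto intro!: arg_cong[where f=\<phi>] oja_cong)
  qed
  have bd: "\<bar>d k x\<bar> \<le> \<alpha> k * C" if "x \<in> space M" for k x
    unfolding d_def using C[OF V_unit] apos[of k] by (simp add: abs_mult mult_left_mono)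
  have sD: "summable (\<lambda>k. (\<alpha> k * C)\<^sup>2)"
    using summable_mult2[OF sq, of "C\<^sup>2"] by (simp add: power_mult_distrib)
  have "AE x in M. convergent (\<lambda>N. E.ssum d N x)" by (rule E.ssum_conv[OF pd bd sD])
  then show ?thesis
    by (rule AE_mp) (auto intro!: AE_I2 simp: E.ssum_def summable_iff_convergent d_def e_def mult.assoc)
qed

lemma final: "AE x in M. \<forall>u r. strict_mono r \<and>
           (\<lambda>n. oja_iter \<alpha> (\<lambda>k. H (W k x)) v0 (r n)) \<longlonglongrightarrow> u
           \<longrightarrow> (\<exists>c. Hbar *v u = c *s u)"
proof -
  define \<Phi> where "\<Phi> y u = outer y u - inner u y *\<^sub>R outer u u" for y u :: "real^'d"
  have c1: "continuous_on UNIV (\<lambda>u. \<Phi> (axis l 1) u $ i $ j)" for l i j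
    unfolding \<Phi>_def by (intro continuous_intros cont_outer)
  have c2: "continuous_on UNIV (\<lambda>u. \<Phi> (gA Hbar u) u $ i $ j)" for i j
    unfolding \<Phi>_def by (intro continuous_intros cont_outer cont_gA)
  have A1: "AE x in M. \<forall>l i j. summable (\<lambda>n. \<alpha> n * \<Phi> (axis l 1) (V n (\<lambda>k. W k x)) $ i $ j * (H (W n x) - Hbar) $ i $ j)"
    by (intro AE_all_finite_type noise_term c1)
  have A2: "AE x in M. \<forall>i j. summable (\<lambda>n. \<alpha> n * \<Phi> (gA Hbar (V n (\<lambda>k. W k x))) (V n (\<lambda>k. W k x)) $ i $ j * (H (W n x) - Hbar) $ i $ j)"
    by (intro AE_all_finite_type noise_term c2)
  show ?thesis
  proof (rule AE_mp[OF AE_conjI[OF AE_space AE_conjI[OF A1 A2]]], rule AE_I2, rule impI, intro allI)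
    fix x u and r :: "nat \<Rightarrow> nat"
    assume "x \<in> space M \<and> (\<forall>l i j. summable (\<lambda>n. \<alpha> n * \<Phi> (axis l 1) (V n (\<lambda>k. W k x)) $ i $ j * (H (W n x) - Hbar) $ i $ j)) \<and>
       (\<forall>i j. summable (\<lambda>n. \<alpha> n * \<Phi> (gA Hbar (V n (\<lambda>k. W k x))) (V n (\<lambda>k. W k x)) $ i $ j * (H (W n x) - Hbar) $ i $ j))"
    then have x: "x \<in> space M"
      and s1: "\<And>l i j. summable (\<lambda>n. \<alpha> n * \<Phi> (axis l 1) (V n (\<lambda>k. W k x)) $ i $ j * (H (W n x) - Hbar) $ i $ j)"
      and s2: "\<And>i j. summable (\<lambda>n. \<alpha> n * \<Phi> (gA Hbar (V n (\<lambda>k. W k x))) (V n (\<lambda>k. W k x)) $ i $ j * (H (W n x) - Hbar) $ i $ j)"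
      by auto
    define Hs where "Hs k = H (W k x)" for k
    define v where "v n = oja_iter \<alpha> Hs v0 n" for n
    have Hs_eq: "Hs = (\<lambda>k. H (W k x))" by (simp add: fun_eq_iff Hs_def)
    have vV: "v n = V n (\<lambda>k. W k x)" for n by (simp add: v_def V_def Hs_eq)
    have noise1: "summable (\<lambda>n. \<alpha> n * (gA (Hs n) (v n) - gA Hbar (v n)) $ l)" for l
    proof -
      have "\<alpha> n * (gA (Hs n) (v n) - gA Hbar (v n)) $ l = (\<Sum>i\<in>UNIV. \<Sum>j\<in>UNIV. \<alpha> n * \<Phi> (axis l 1) (V n (\<lambda>k. W k x)) $ i $ j * (H (W n x) - Hbar) $ i $ j)" for n
      proof -
        have "(gA (Hs n) (v n) - gA Hbar (v n)) $ l = inner (gA (Hs n) (v n) - gA Hbar (v n)) (axis l 1)"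
          by (simp add: inner_axis)
        also have "\<dots> = (\<Sum>i\<in>UNIV. \<Sum>j\<in>UNIV. (Hs n - Hbar)$i$j * \<Phi> (axis l 1) (v n) $ i $ j)"
          unfolding \<Phi>_def by (rule inner_noise)
        finally show ?thesis by (simp add: sum_distrib_left vV Hs_def mult_ac)
      qed
      then show ?thesis by (simp only:) (intro summable_sum s1)
    qed
    have noise2: "summable (\<lambda>n. \<alpha> n * inner (gA Hbar (v n)) (gA (Hs n) (v n) - gA Hbar (v n)))"
    proof -
      have "\<alpha> n * inner (gA Hbar (v n)) (gA (Hs n) (v n) - gA Hbar (v n)) = (\<Sum>i\<in>UNIV. \<Sum>j\<in>UNIV. \<alpha> n * \<Phi> (gA Hbar (V n (\<lambda>k. W k x))) (V n (\<lambda>k. W k x)) $ i $ j * (H (W n x) - Hbar) $ i $ j)" for n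
      proof -
        have "inner (gA Hbar (v n)) (gA (Hs n) (v n) - gA Hbar (v n)) = inner (gA (Hs n) (v n) - gA Hbar (v n)) (gA Hbar (v n))"
          by (rule inner_commute)
        also have "\<dots> = (\<Sum>i\<in>UNIV. \<Sum>j\<in>UNIV. (Hs n - Hbar)$i$j * \<Phi> (gA Hbar (v n)) (v n) $ i $ j)"
          unfolding \<Phi>_def by (rule inner_noise)
        finally show ?thesis by (simp add: sum_distrib_left vV Hs_def mult_ac)
      qed
      then show ?thesis by (simp only:) (intro summable_sum s2)
    qed
    have Gb: "norm (Hs n *v u) \<le> G1" if "norm u = 1" for n u
      using HvB[OF measurable_space[OF Wm x], of n u] that by (simp add: Hs_def)
    have lim: "(\<lambda>n. gA Hbar (oja_iter \<alpha> Hs v0 n)) \<longlonglongrightarrow> 0"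
      by (rule det_main[OF symA v0 apos nsum sq Gb]) (use noise1 noise2 in \<open>simp_all add: v_def Hs_eq\<close>)
    show "strict_mono r \<and> (\<lambda>n. oja_iter \<alpha> (\<lambda>k. H (W k x)) v0 (r n)) \<longlonglongrightarrow> u \<longrightarrow> (\<exists>c. Hbar *v u = c *s u)"
    proof
      assume "strict_mono r \<and> (\<lambda>n. oja_iter \<alpha> (\<lambda>k. H (W k x)) v0 (r n)) \<longlonglongrightarrow> u"
      then have r: "strict_mono r" and cu: "(\<lambda>n. v (r n)) \<longlonglongrightarrow> u" by (auto simp: v_def Hs_eq)
      have "(\<lambda>n. gA Hbar (v (r n))) \<longlonglongrightarrow> 0"
        using LIMSEQ_subseq_LIMSEQ[OF lim r] by (simp add: comp_def v_def)
      moreover have "(\<lambda>n. gA Hbar (v (r n))) \<longlonglongrightarrow> gA Hbar u"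
        by (rule isCont_tendsto_compose[OF _ cu]) (use cont_gA[of UNIV Hbar] in \<open>simp add: continuous_on_eq_continuous_at\<close>)
      ultimately have "gA Hbar u = 0" using LIMSEQ_unique by blast
      then have "Hbar *v u = inner u (Hbar *v u) *s u" by (simp add: gA_def scalar_mult_eq_scaleR)
      then show "\<exists>c. Hbar *v u = c *s u" by blast
    qed
  qed
qed

end

theorem proposition4p10:
  fixes M :: "'a measure" and P :: "'w measure"
    and W :: "nat \<Rightarrow> 'a \<Rightarrow> 'w"
    and H :: "'w \<Rightarrow> real^'d^'d" and Hbar :: "real^'d^'d"
    and \<alpha> :: "nat \<Rightarrow> real" and \<sigma> G1 :: real and v0 :: "real^'d"
  assumes "prob_space M" and "prob_space P"
    and "\<And>n. W n \<in> measurable M P"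
    and "prob_space.indep_vars M (\<lambda>_. P) W UNIV"
    and "\<And>n. distr M P (W n) = P"
    and "transpose Hbar = Hbar"
    and "H \<in> borel_measurable P"
    and "\<forall>w\<in>space P. transpose (H w) = H w"
    and "integral\<^sup>L P H = Hbar"
    and "integral\<^sup>L P (\<lambda>w. (opnorm2 (H w))^2) \<le> \<sigma>^2"
    and "\<forall>w\<in>space P. opnorm2 (H w) \<le> G1"
    and "\<And>n. \<alpha> n > 0"
    and "\<not> summable \<alpha>"
    and "summable (\<lambda>n. (\<alpha> n)^2)"
    and "norm v0 = 1"
  shows "AE x in M. \<forall>u r. strict_mono r \<and>
           (\<lambda>n. oja_iter \<alpha> (\<lambda>k. H (W k x)) v0 (r n)) \<longlonglongrightarrow> u
           \<longrightarrow> (\<exists>c. Hbar *v u = c *s u)"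
proof -
  interpret O: oja M P W H Hbar \<alpha> G1 v0
    unfolding oja_def oja_axioms_def using assms by auto
  show ?thesis by (rule O.final)
qed

end
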